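(* Let $n,p$ be positive integers with $n-p-1>0$, let $N>0$, and let $p(Y\mid M)$ be the density of $Y\in\mathbb R^{n\times p}$ with independent entries $Y_{ai}\sim\mathrm N(M_{ai},N^{-1})$. Let $\pi_{\mathrm{MSVS2}}(M)=\det(M^\top M)^{-(n-p-1)/2}\prod_{i=1}^p\|M_{\cdot i}\|^{-\gamma_i}$, where $M_{\cdot i}$ is the $i$-th column of $M$. If $0\le\gamma_i\le p$ for every $i$, then $m_{\mathrm{MSVS2}}(Y)=\int p(Y\mid M)\pi_{\mathrm{MSVS2}}(M)\,\mathrm dM<\infty$ for every $Y$.
   Context: $\|\cdot\|$ is the Euclidean norm on $\mathbb R^n$. *)

theory Defs
  imports "HOL-Probability.Probability"
begin

text \<open>Matrices M in R^(n x p) are rendered as real^'p^'n (rows indexed by 'n,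
columns by 'p); entry M_{ai} is M $ a $ i.\<close>

definition mcol :: "real^'p^'n \<Rightarrow> 'p \<Rightarrow> real^'n" where
  "mcol M i = (\<chi> a. M $ a $ i)"

text \<open>Density p(Y | M): independent entries Y_{ai} ~ N(M_{ai}, 1/N),
i.e. standard deviation 1/sqrt N.\<close>
definition lik :: "real \<Rightarrow> real^'p^'n \<Rightarrow> real^'p^'n \<Rightarrow> real" where
  "lik N Y M = (\<Prod>a\<in>UNIV. \<Prod>i\<in>UNIV. normal_density (M $ a $ i) (1 / sqrt N) (Y $ a $ i))"

definition prior_MSVS2 :: "('p \<Rightarrow> real) \<Rightarrow> real^'p^'n \<Rightarrow> real" where
  "prior_MSVS2 \<gamma> M =
     det (transpose M ** M) powr (- (real CARD('n) - real CARD('p) - 1) / 2)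
     * (\<Prod>i\<in>UNIV. norm (mcol M i) powr (- \<gamma> i))"

definition m_MSVS2 :: "real \<Rightarrow> ('p \<Rightarrow> real) \<Rightarrow> real^'p^'n \<Rightarrow> ennreal" where
  "m_MSVS2 N \<gamma> Y = (\<integral>\<^sup>+ M. ennreal (lik N Y M * prior_MSVS2 \<gamma> M) \<partial>lborel)"

end

theory Submission
  imports Defs
begin
lemma det_shear_matrix:
  fixes m n :: "'n::finite"
  assumes "m \<noteq> n"
  shows "det (matrix (\<lambda>v::real^'n. \<chi> i. if i = m then v $ m + v $ n else v $ i)) = 1"
proof -
  have "matrix (\<lambda>v::real^'n. \<chi> i. if i = m then v $ m + v $ n else v $ i)
      = (\<chi> k. if k = m then row m (mat 1) + 1 *s row n (mat 1) else row k (mat 1 :: real^'n^'n))"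
    by (auto simp: matrix_def vec_eq_iff row_def mat_def axis_def)
  then show ?thesis
    using det_row_operation[OF assms, of "mat 1 :: real^'n^'n" 1] by simp
qed

proposition
 fixes f :: "real^'n::finite \<Rightarrow> real^'n::_"
  assumes "linear f" "S \<in> lmeasurable"
  shows my_measurable_linear_image: "(f ` S) \<in> lmeasurable"
    and my_measure_linear_image: "measure lebesgue (f ` S) = \<bar>det (matrix f)\<bar> * measure lebesgue S" (is "?Q f S")
proof -
  have "\<forall>S \<in> lmeasurable. (f ` S) \<in> lmeasurable \<and> ?Q f S"
  proof (rule induct_linear_elementary [OF \<open>linear f\<close>]; intro ballI)
    fix f g and S :: "(real,'n) vec set"
    assume "linear f" and "linear g"
      and f [rule_format]: "\<forall>S \<in> lmeasurable. f ` S \<in> lmeasurable \<and> ?Q f S"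
      and g [rule_format]: "\<forall>S \<in> lmeasurable. g ` S \<in> lmeasurable \<and> ?Q g S"
      and S: "S \<in> lmeasurable"
    then have gS: "g ` S \<in> lmeasurable"
      by blast
    show "(f \<circ> g) ` S \<in> lmeasurable \<and> ?Q (f \<circ> g) S"
      using f [OF gS] g [OF S] matrix_compose [OF \<open>linear g\<close> \<open>linear f\<close>]
      by (simp add: o_def image_comp abs_mult det_mul)
  next
    fix f :: "real^'n::_ \<Rightarrow> real^'n::_" and i and S :: "(real^'n::_) set"
    assume "linear f" and 0: "\<And>x. f x $ i = 0" and "S \<in> lmeasurable"
    then have "\<not> inj f"
      by (metis (full_types) linear_injective_imp_surjective one_neq_zero surjE vec_component)
    have detf: "det (matrix f) = 0"
      using \<open>\<not> inj f\<close> det_nz_iff_inj[OF \<open>linear f\<close>] by blast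
    show "f ` S \<in> lmeasurable \<and> ?Q f S"
    proof
      show "f ` S \<in> lmeasurable"
        using lmeasurable_iff_indicator_has_integral \<open>linear f\<close> \<open>\<not> inj f\<close> negligible_UNIV negligible_linear_singular_image by blast
      have "measure lebesgue (f ` S) = 0"
        by (meson \<open>\<not> inj f\<close> \<open>linear f\<close> negligible_imp_measure0 negligible_linear_singular_image)
      also have "\<dots> = \<bar>det (matrix f)\<bar> * measure lebesgue S"
        by (simp add: detf)
      finally show "?Q f S" .
    qed
  next
    fix c and S :: "(real^'n::_) set"
    assume "S \<in> lmeasurable"
    show "(\<lambda>a. \<chi> i. c i * a $ i) ` S \<in> lmeasurable \<and> ?Q (\<lambda>a. \<chi> i. c i * a $ i) S"
    proof
      show "(\<lambda>a. \<chi> i. c i * a $ i) ` S \<in> lmeasurable"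
        by (simp add: \<open>S \<in> lmeasurable\<close> measurable_stretch)
      show "?Q (\<lambda>a. \<chi> i. c i * a $ i) S"
        by (simp add: measure_stretch [OF \<open>S \<in> lmeasurable\<close>, of c] axis_def matrix_def det_diagonal)
    qed
  next
    fix m :: "'n" and n :: "'n" and S :: "(real, 'n) vec set"
    assume "m \<noteq> n" and "S \<in> lmeasurable"
    let ?h = "\<lambda>v::(real, 'n) vec. \<chi> i. v $ Transposition.transpose m n i"
    have lin: "linear ?h"
      by (rule linearI) (simp_all add: plus_vec_def scaleR_vec_def)
    have meq: "measure lebesgue ((\<lambda>v::(real, 'n) vec. \<chi> i. v $ Transposition.transpose m n i) ` cbox a b)
             = measure lebesgue (cbox a b)" for a b
    proof (cases "cbox a b = {}")
      case True then show ?thesis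
        by simp
    next
      case False
      then have him: "?h ` (cbox a b) \<noteq> {}"
        by blast
      have eq: "?h ` (cbox a b) = cbox (?h a) (?h b)"
        by (auto simp: image_iff lambda_swap_Galois mem_box_cart) (metis transpose_involutory)+
      show ?thesis
        using him prod.permute [OF permutes_swap_id, where S=UNIV and g="\<lambda>i. (b - a)$i", symmetric]
        by (simp add: eq content_cbox_cart False)
    qed
    have "(\<chi> i j. if Transposition.transpose m n i = j then 1 else 0) = (\<chi> i j. if j = Transposition.transpose m n i then 1 else (0::real))"
      by (auto intro!: Cart_lambda_cong)
    then have "matrix ?h = transpose(\<chi> i j. mat 1 $ i $ Transposition.transpose m n j)"
      by (auto simp: matrix_eq transpose_def axis_def mat_def matrix_def)
    then have 1: "\<bar>det (matrix ?h)\<bar> = 1"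
      by (simp add: det_permute_columns permutes_swap_id sign_swap_id abs_mult)
    show "?h ` S \<in> lmeasurable \<and> ?Q ?h S"
      using measure_linear_sufficient [OF lin \<open>S \<in> lmeasurable\<close>] meq 1 by force
  next
    fix m n :: "'n" and S :: "(real, 'n) vec set"
    assume "m \<noteq> n" and "S \<in> lmeasurable"
    let ?h = "\<lambda>v::(real, 'n) vec. \<chi> i. if i = m then v $ m + v $ n else v $ i"
    have lin: "linear ?h"
      by (rule linearI) (auto simp: algebra_simps plus_vec_def scaleR_vec_def vec_eq_iff)
    have 1: "det(matrix ?h) = 1"
      by (rule det_shear_matrix[OF \<open>m \<noteq> n\<close>])
    have meq: "measure lebesgue (?h ` (cbox a b)) = measure lebesgue (cbox a b)" for a b
    proof (cases "cbox a b = {}")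
      case True then show ?thesis by simp
    next
      case False
      then have ne: "(+) (\<chi> i. if i = n then - a $ n else 0) ` cbox a b \<noteq> {}"
        by auto
      let ?v = "\<chi> i. if i = n then - a $ n else 0"
      have "?h ` cbox a b
            = (+) (\<chi> i. if i = m \<or> i = n then a $ n else 0) ` ?h ` (+) ?v ` (cbox a b)"
        using \<open>m \<noteq> n\<close> unfolding image_comp o_def by (force simp: vec_eq_iff)
      then have "measure lebesgue (?h ` (cbox a b))
               = measure lebesgue ((\<lambda>v. \<chi> i. if i = m then v $ m + v $ n else v $ i) `
                                   (+) ?v ` cbox a b)"
        by (rule ssubst) (rule measure_translation)
      also have "\<dots> = measure lebesgue ((\<lambda>v. \<chi> i. if i = m then v $ m + v $ n else v $ i) ` cbox (?v +a) (?v + b))"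
        by (metis (no_types, lifting) cbox_translation)
      also have "\<dots> = measure lebesgue ((+) ?v ` cbox a b)"
        apply (subst measure_shear_interval)
        using \<open>m \<noteq> n\<close> ne apply auto
        apply (simp add: cbox_translation)
        by (metis cbox_borel cbox_translation measure_completion sets_lborel)
      also have "\<dots> = measure lebesgue (cbox a b)"
        by (rule measure_translation)
        finally show ?thesis .
      qed
    show "?h ` S \<in> lmeasurable \<and> ?Q ?h S"
      using measure_linear_sufficient [OF lin \<open>S \<in> lmeasurable\<close>] meq 1 by force
  qed
  with assms show "(f ` S) \<in> lmeasurable" "?Q f S"
    by metis+
qed

lemma orth_lborel_invariant:
  fixes Q :: "real^'n::finite^'n"
  assumes Q: "orthogonal_matrix Q"
  shows "distr lborel borel (\<lambda>v. Q *v v) = lborel"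
proof (rule lborel_eqI[symmetric])
  have QT: "transpose Q ** Q = mat 1" "Q ** transpose Q = mat 1"
    using Q by (auto simp: orthogonal_matrix_def)
  have lin: "linear (\<lambda>v. transpose Q *v v)" by (rule matrix_vector_mul_linear)
  have ot: "orthogonal_transformation (\<lambda>v. transpose Q *v v)"
    unfolding orthogonal_transformation_matrix
    using Q lin by (simp add: orthogonal_matrix_transpose matrix_of_matrix_vector_mul)
  fix l u :: "real^'n"
  have pre: "(\<lambda>v. Q *v v) -` box l u = (\<lambda>v. transpose Q *v v) ` box l u"
  proof (intro set_eqI iffI)
    fix v assume "v \<in> (\<lambda>v. Q *v v) -` box l u"
    moreover have "v = transpose Q *v (Q *v v)"
      by (metis matrix_vector_mul_assoc QT matrix_vector_mul_lid)
    ultimately show "v \<in> (\<lambda>v. transpose Q *v v) ` box l u" by blast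
  next
    fix v assume "v \<in> (\<lambda>v. transpose Q *v v) ` box l u"
    then obtain w where "w \<in> box l u" "v = transpose Q *v w" by blast
    moreover have "Q *v (transpose Q *v w) = w"
      by (metis matrix_vector_mul_assoc QT matrix_vector_mul_lid)
    ultimately show "v \<in> (\<lambda>v. Q *v v) -` box l u"
      by simp
  qed
  have bm: "box l u \<in> lmeasurable" by simp
  have m1: "(\<lambda>v. transpose Q *v v) ` box l u \<in> lmeasurable"
    using my_measurable_linear_image[OF lin bm] .
  have m2: "measure lebesgue ((\<lambda>v. transpose Q *v v) ` box l u) = measure lebesgue (box l u)"
    using my_measure_linear_image[OF lin bm] ot
    by (metis (no_types, lifting) orthogonal_transformation_det mult_1 matrix_of_matrix_vector_mul)
  have meas: "(\<lambda>v. Q *v v) \<in> borel_measurable borel"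
    by (intro borel_measurable_continuous_onI linear_continuous_on) simp
  have "emeasure (distr lborel borel (\<lambda>v. Q *v v)) (box l u) = emeasure lborel ((\<lambda>v. Q *v v) -` box l u)"
    by (simp add: emeasure_distr meas)
  also have "\<dots> = emeasure lebesgue ((\<lambda>v. transpose Q *v v) ` box l u)"
  proof -
    have "(\<lambda>v. Q *v v) -` box l u = (\<lambda>v. Q *v v) -` box l u \<inter> space borel" by simp
    also have "\<dots> \<in> sets borel" using meas by (rule measurable_sets) simp
    finally have "(\<lambda>v. Q *v v) -` box l u \<in> sets lborel" by simp
    then show ?thesis unfolding pre[symmetric] by simp
  qed
  also have "\<dots> = emeasure lebesgue (box l u)"
    using m1 bm m2 by (simp add: emeasure_eq_measure2)
  also have "\<dots> = emeasure lborel (box l u)"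
    by (simp add: emeasure_completion)
  finally show "emeasure (distr lborel borel (\<lambda>v. Q *v v)) (box l u) = (\<Prod>b\<in>Basis. (u - l) \<bullet> b)"
    if "\<And>b. b \<in> Basis \<Longrightarrow> l \<bullet> b \<le> u \<bullet> b"
    using that by (simp add: emeasure_lborel_box_eq)
qed simp

lemma prod_Basis_vec:
  fixes g :: "('a::euclidean_space)^'n::finite \<Rightarrow> 'b::comm_monoid_mult"
  shows "(\<Prod>b\<in>Basis. g b) = (\<Prod>i\<in>UNIV. \<Prod>u\<in>Basis. g (axis i u))"
proof -
  have B: "(Basis :: ('a^'n) set) = (\<lambda>(i,u). axis i u) ` (UNIV \<times> Basis)"
    unfolding Basis_vec_def by auto
  have inj: "inj_on (\<lambda>(i,u). axis i u :: 'a^'n) (UNIV \<times> (Basis::'a set))"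
    by (auto simp: inj_on_def axis_eq_axis nonzero_Basis)
  show ?thesis
    unfolding B prod.reindex[OF inj] by (simp add: prod.cartesian_product split_def)
qed

lemma prod_Basis_real_vec:
  fixes g :: "real^'n::finite \<Rightarrow> 'b::comm_monoid_mult"
  shows "(\<Prod>b\<in>Basis. g b) = (\<Prod>i\<in>UNIV. g (axis i 1))"
  by (simp add: prod_Basis_vec)

lemma prod_Basis_real_vec2:
  fixes g :: "real^'p::finite^'n::finite \<Rightarrow> 'b::comm_monoid_mult"
  shows "(\<Prod>b\<in>Basis. g b) = (\<Prod>a\<in>UNIV. \<Prod>i\<in>UNIV. g (axis a (axis i 1)))"
  by (simp add: prod_Basis_vec)

lemma mem_box_vec2:
  fixes M l u :: "real^'p::finite^'n::finite"
  shows "M \<in> box l u \<longleftrightarrow> (\<forall>a i. l$a$i < M$a$i \<and> M$a$i < u$a$i)"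
  by (auto simp: mem_box Basis_vec_def inner_axis)

lemma psf_lborel: "product_sigma_finite (\<lambda>_. (lborel :: ('a::euclidean_space) measure))"
  by (simp add: product_sigma_finite_def lborel.sigma_finite_measure_axioms)

lemma lborel_vec_PiM:
  "(lborel :: (real^'n::finite) measure) = distr (\<Pi>\<^sub>M i\<in>UNIV. (lborel::real measure)) borel (\<lambda>x. vec_lambda x)"
proof (rule lborel_eqI)
  have meas: "(\<lambda>x. vec_lambda x :: real^'n) \<in> borel_measurable (\<Pi>\<^sub>M i\<in>UNIV. (lborel::real measure))"
    by (subst borel_measurable_euclidean_space) (auto simp: Basis_vec_def inner_axis)
  fix l u :: "real^'n"
  assume le: "\<And>b. b \<in> Basis \<Longrightarrow> l \<bullet> b \<le> u \<bullet> b"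
  have le': "l$i \<le> u$i" for i
  proof -
    have "axis i 1 \<in> (Basis::(real^'n) set)" by simp
    from le[OF this] show ?thesis by (simp add: inner_axis)
  qed
  have pre: "(\<lambda>x. vec_lambda x :: real^'n) -` box l u \<inter> space (\<Pi>\<^sub>M i\<in>UNIV. (lborel::real measure))
       = (\<Pi>\<^sub>E i\<in>UNIV. {l$i<..<u$i})"
    by (auto simp: mem_box_cart space_PiM PiE_iff)
  have "emeasure (distr (\<Pi>\<^sub>M i\<in>UNIV. (lborel::real measure)) borel (\<lambda>x. vec_lambda x :: real^'n)) (box l u)
      = emeasure (\<Pi>\<^sub>M i\<in>UNIV. (lborel::real measure)) (\<Pi>\<^sub>E i\<in>UNIV. {l$i<..<u$i})"
    by (simp add: emeasure_distr meas pre)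
  also have "\<dots> = (\<Prod>i\<in>UNIV. emeasure lborel {l$i<..<u$i})"
    by (simp add: product_sigma_finite.emeasure_PiM[OF psf_lborel])
  also have "\<dots> = (\<Prod>i\<in>UNIV. ennreal (u$i - l$i))"
    using le' by simp
  also have "\<dots> = ennreal (\<Prod>b\<in>Basis. (u - l) \<bullet> b)"
    using le' by (simp add: prod_Basis_real_vec inner_axis prod_ennreal)
  finally show "emeasure (distr (\<Pi>\<^sub>M i\<in>UNIV. (lborel::real measure)) borel (\<lambda>x. vec_lambda x :: real^'n)) (box l u)
      = (\<Prod>b\<in>Basis. (u - l) \<bullet> b)" .
qed simp

lemma mat_PiM_meas:
  "(\<lambda>x. \<chi> a i. x i $ a :: real^'p::finite^'n::finite) \<in> borel_measurable (\<Pi>\<^sub>M i\<in>UNIV. (lborel::(real^'n) measure))"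
  proof (subst borel_measurable_euclidean_space, auto simp: Basis_vec_def inner_axis)
  fix a :: 'n and i :: 'p
  have 1: "(\<lambda>v::real^'n. v $ a) \<in> borel_measurable borel"
    by (intro borel_measurable_continuous_onI continuous_intros)
  have 2: "(\<lambda>x. x i) \<in> (\<Pi>\<^sub>M i\<in>(UNIV::'p set). (lborel::(real^'n) measure)) \<rightarrow>\<^sub>M borel"
    using measurable_component_singleton[of i UNIV "\<lambda>_. (lborel::(real^'n) measure)"]
    by (simp add: measurable_lborel1)
  show "(\<lambda>x. x i $ a) \<in> borel_measurable (\<Pi>\<^sub>M i\<in>(UNIV::'p set). (lborel::(real^'n) measure))"
    using measurable_compose[OF 2 1] by simp
qed

lemma lborel_mat_PiM:
  "(lborel :: (real^'p::finite^'n::finite) measure)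
     = distr (\<Pi>\<^sub>M i\<in>UNIV. (lborel::(real^'n) measure)) borel (\<lambda>x. \<chi> a i. x i $ a)"
proof (rule lborel_eqI)
  have meas: "(\<lambda>x. \<chi> a i. x i $ a :: real^'p^'n) \<in> borel_measurable (\<Pi>\<^sub>M i\<in>UNIV. (lborel::(real^'n) measure))"
  proof (subst borel_measurable_euclidean_space, auto simp: Basis_vec_def inner_axis)
    fix a :: 'n and i :: 'p
    have 1: "(\<lambda>v::real^'n. v $ a) \<in> borel_measurable borel"
      by (intro borel_measurable_continuous_onI continuous_intros)
    have 2: "(\<lambda>x. x i) \<in> (\<Pi>\<^sub>M i\<in>(UNIV::'p set). (lborel::(real^'n) measure)) \<rightarrow>\<^sub>M borel"
      using measurable_component_singleton[of i UNIV "\<lambda>_. (lborel::(real^'n) measure)"]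
      by (simp add: measurable_lborel1)
    show "(\<lambda>x. x i $ a) \<in> borel_measurable (\<Pi>\<^sub>M i\<in>(UNIV::'p set). (lborel::(real^'n) measure))"
      using measurable_compose[OF 2 1] by simp
  qed
  fix l u :: "real^'p^'n"
  assume le: "\<And>b. b \<in> Basis \<Longrightarrow> l \<bullet> b \<le> u \<bullet> b"
  have le': "l$a$i \<le> u$a$i" for a i
  proof -
    have "axis a (axis i 1) \<in> (Basis::(real^'p^'n) set)" by simp
    from le[OF this] show ?thesis by (simp add: inner_axis)
  qed
  have pre: "(\<lambda>x. \<chi> a i. x i $ a :: real^'p^'n) -` box l u \<inter> space (\<Pi>\<^sub>M i\<in>UNIV. (lborel::(real^'n) measure))
       = (\<Pi>\<^sub>E i\<in>UNIV. box (\<chi> a. l$a$i) (\<chi> a. u$a$i))"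
    by (auto simp: mem_box_cart mem_box_vec2 space_PiM PiE_iff)
  have "emeasure (distr (\<Pi>\<^sub>M i\<in>UNIV. (lborel::(real^'n) measure)) borel (\<lambda>x. \<chi> a i. x i $ a :: real^'p^'n)) (box l u)
      = emeasure (\<Pi>\<^sub>M i\<in>UNIV. (lborel::(real^'n) measure)) (\<Pi>\<^sub>E i\<in>UNIV. box (\<chi> a. l$a$i) (\<chi> a. u$a$i))"
    by (simp add: emeasure_distr meas pre)
  also have "\<dots> = (\<Prod>i\<in>UNIV. emeasure lborel (box (\<chi> a. l$a$i) (\<chi> a. u$a$i)))"
    by (simp add: product_sigma_finite.emeasure_PiM[OF psf_lborel])
  also have "\<dots> = (\<Prod>i\<in>UNIV. ennreal (\<Prod>b\<in>Basis. ((\<chi> a. u$a$i) - (\<chi> a. l$a$i)) \<bullet> b))"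
    using le' by (subst emeasure_lborel_box_eq) (auto simp: inner_axis Basis_vec_def)
  also have "\<dots> = (\<Prod>i\<in>UNIV. ennreal (\<Prod>a\<in>UNIV. u$a$i - l$a$i))"
    by (simp add: prod_Basis_real_vec inner_axis)
  also have "\<dots> = ennreal (\<Prod>i\<in>UNIV. \<Prod>a\<in>UNIV. u$a$i - l$a$i)"
    using le' by (intro prod_ennreal) (simp add: prod_nonneg)
  also have "(\<Prod>i\<in>UNIV. \<Prod>a\<in>UNIV. u$a$i - l$a$i) = (\<Prod>a\<in>UNIV. \<Prod>i\<in>UNIV. u$a$i - l$a$i)"
    by (rule prod.swap)
  also have "\<dots> = (\<Prod>b\<in>Basis. (u - l) \<bullet> b)"
    unfolding prod_Basis_real_vec2 by (simp add: inner_axis)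
  finally show "emeasure (distr (\<Pi>\<^sub>M i\<in>UNIV. (lborel::(real^'n) measure)) borel (\<lambda>x. \<chi> a i. x i $ a :: real^'p^'n)) (box l u)
      = (\<Prod>b\<in>Basis. (u - l) \<bullet> b)" .
qed simp

definition gmat :: "'p::finite set \<Rightarrow> ('p \<Rightarrow> real^'n::finite) \<Rightarrow> real^'p^'p" where
  "gmat S x = (\<chi> i j. if i \<in> S \<and> j \<in> S then x i \<bullet> x j else if i = j then 1 else 0)"

definition gram :: "'p::finite set \<Rightarrow> ('p \<Rightarrow> real^'n::finite) \<Rightarrow> real" where
  "gram S x = det (gmat S x)"

lemma gram_UNIV: "gram UNIV x = det (transpose (\<chi> a i. x i $ a) ** (\<chi> a i. x i $ a))"
  unfolding gram_def gmat_def
  by (rule arg_cong[where f=det]) (simp add: vec_eq_iff matrix_matrix_mult_def transpose_def inner_vec_def)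

lemma gram_upd_out: "j \<notin> S \<Longrightarrow> gram S (x(j := v)) = gram S x"
  unfolding gram_def gmat_def
  by (rule arg_cong[where f=det]) (auto simp: vec_eq_iff)

lemma gram_add_one:
  assumes j: "j \<notin> S" and i: "i \<in> S"
  shows "gram (insert j S) (x(j := x j + c *\<^sub>R x i)) = gram (insert j S) x"
proof -
  let ?A = "gmat (insert j S) x"
  have ij: "j \<noteq> i" using i j by auto
  let ?B = "(\<chi> k. if k = j then row j ?A + c *s row i ?A else row k ?A)"
  let ?C = "(\<chi> k. if k = j then row j (transpose ?B) + c *s row i (transpose ?B) else row k (transpose ?B))"
  have dB: "det ?B = det ?A" by (rule det_row_operation[OF ij])
  have dC: "det ?C = det (transpose ?B)" by (rule det_row_operation[OF ij])
  have "gmat (insert j S) (x(j := x j + c *\<^sub>R x i)) = ?C"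
    using i j ij
    by (auto simp: vec_eq_iff gmat_def row_def transpose_def inner_add_left inner_add_right
        algebra_simps inner_commute)
  then show ?thesis
    unfolding gram_def using dB dC by simp
qed

lemma gram_add_span:
  assumes j: "j \<notin> S" and w: "w \<in> span (x ` S)"
  shows "gram (insert j S) (x(j := x j + w)) = gram (insert j S) x"
  using w
proof (induction w rule: span_induct_alt)
  case base
  then show ?case by simp
next
  case (step c z y)
  then obtain i where i: "i \<in> S" "z = x i" by blast
  let ?x' = "x(j := x j + y)"
  have "x(j := x j + (c *\<^sub>R z + y)) = ?x'(j := ?x' j + c *\<^sub>R ?x' i)"
    using i j by (auto simp: fun_eq_iff algebra_simps)
  then have "gram (insert j S) (x(j := x j + (c *\<^sub>R z + y))) = gram (insert j S) ?x'"
    using gram_add_one[OF j i(1), of ?x' c] by simp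
  also have "\<dots> = gram (insert j S) x" by (rule step.IH)
  finally show ?case .
qed

lemma gram_orth:
  assumes j: "j \<notin> S" and r: "\<And>i. i \<in> S \<Longrightarrow> r \<bullet> x i = 0"
  shows "gram (insert j S) (x(j := r)) = (r \<bullet> r) * gram S x"
proof -
  let ?G = "gmat S x"
  have "gmat (insert j S) (x(j := r)) = (\<chi> k. if k = j then (r \<bullet> r) *s row k ?G else row k ?G)"
    using j r by (auto simp: vec_eq_iff gmat_def row_def inner_commute)
  moreover have "(\<chi> k. if k = j then row j ?G else row k ?G) = ?G"
    by (simp add: vec_eq_iff row_def)
  moreover have "(\<chi> k. row k ?G) = ?G"
    by (simp add: vec_eq_iff row_def)
  ultimately show ?thesis
    unfolding gram_def using det_row_mul[of j "r \<bullet> r" "\<lambda>k. row k ?G" "\<lambda>k. row k ?G"] by simp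
qed

lemma gram_decomp:
  assumes j: "j \<notin> S" and fin: "finite S"
  obtains y where "y \<in> span (x ` S)" "\<And>i. i \<in> S \<Longrightarrow> (v - y) \<bullet> x i = 0"
    "gram (insert j S) (x(j := v)) = ((v - y) \<bullet> (v - y)) * gram S x"
proof -
  obtain y z where yz: "v = y + z" "y \<in> span (x ` S)" "\<And>w. w \<in> span (x ` S) \<Longrightarrow> orthogonal z w"
    using orthogonal_subspace_decomp_exists[of "x ` S" v] by blast
  have z: "z \<bullet> x i = 0" if "i \<in> S" for i
    using yz(3)[of "x i"] that span_base[of "x i" "x ` S"] by (auto simp: orthogonal_def)
  let ?x' = "x(j := z)"
  have sp: "span (?x' ` S) = span (x ` S)"
    using j by (metis fun_upd_image)
  have "gram (insert j S) (x(j := v)) = gram (insert j S) (?x'(j := ?x' j + y))"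
    using yz(1) by (simp add: add.commute)
  also have "\<dots> = gram (insert j S) ?x'"
    using gram_add_span[OF j, of y ?x'] yz(2) sp by simp
  also have "\<dots> = (z \<bullet> z) * gram S x"
    using gram_orth[OF j, of z x] z by simp
  finally show ?thesis
    using that[of y] yz z by simp
qed

lemma gram_nonneg: "finite S \<Longrightarrow> gram S x \<ge> 0"
proof (induction S arbitrary: x rule: finite_induct)
  case empty
  have "gmat {} x = mat 1" by (simp add: vec_eq_iff gmat_def mat_def)
  then show ?case by (simp add: gram_def)
next
  case (insert j S)
  obtain y where "gram (insert j S) (x(j := x j)) = ((x j - y) \<bullet> (x j - y)) * gram S x"
    using gram_decomp[OF insert(2,1), of x "x j"] by blast
  then show ?case using insert.IH[of x] by simp
qed

lemma gauss_finite:
  assumes c: "c > 0"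
  shows "(\<integral>\<^sup>+ s. ennreal (exp (- c * s\<^sup>2)) \<partial>lborel) < \<infinity>"
proof -
  define \<sigma> where "\<sigma> = sqrt (1 / (2 * c))"
  have \<sigma>: "\<sigma> > 0" using c by (simp add: \<sigma>_def)
  have s2: "2 * \<sigma>\<^sup>2 = 1 / c" using c by (simp add: \<sigma>_def)
  define K where "K = sqrt (2 * pi * \<sigma>\<^sup>2)"
  have K: "K > 0" using \<sigma> by (simp add: K_def)
  have eq: "exp (- c * s\<^sup>2) = K * normal_density 0 \<sigma> s" for s
  proof -
    have "(s - 0)\<^sup>2 / (2 * \<sigma>\<^sup>2) = c * s\<^sup>2" using s2 c by simp
    then show ?thesis using K \<sigma> by (simp add: normal_density_def K_def)
  qed
  have "(\<integral>\<^sup>+ s. ennreal (exp (- c * s\<^sup>2)) \<partial>lborel) = (\<integral>\<^sup>+ s. ennreal K * ennreal (normal_density 0 \<sigma> s) \<partial>lborel)"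
  proof (intro nn_integral_cong)
    fix s :: real
    show "ennreal (exp (- c * s\<^sup>2)) = ennreal K * ennreal (normal_density 0 \<sigma> s)"
      unfolding eq using K by (simp add: ennreal_mult)
  qed
  also have "\<dots> = ennreal K * (\<integral>\<^sup>+ s. ennreal (normal_density 0 \<sigma> s) \<partial>lborel)"
    by (rule nn_integral_cmult) simp
  also have "(\<integral>\<^sup>+ s. ennreal (normal_density 0 \<sigma> s) \<partial>lborel) = 1"
    using \<sigma> by (subst nn_integral_eq_integral) (auto intro: integrable_normal_density)
  finally show ?thesis by simp
qed

lemma powr_01_finite:
  assumes "0 \<le> e" "e < 1"
  shows "(\<integral>\<^sup>+ s. ennreal (indicator {0..1} s * s powr (-e)) \<partial>lborel) < \<infinity>"
proof -
  have "((\<lambda>x. x powr (-e)) has_integral (1 powr (-e+1) / (-e+1))) {0..1::real}"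
    by (rule has_integral_powr_from_0) (use assms in auto)
  then have "integral\<^sup>N lborel (\<lambda>x. indicator {0..1} x * x powr (-e)) = 1 powr (-e+1) / (-e+1)"
    by (intro nn_integral_has_integral_lebesgue) auto
  then show ?thesis by simp
qed

lemma oneD_finite:
  assumes "0 \<le> e" "e < 1" "c > 0"
  shows "(\<integral>\<^sup>+ s. ennreal (\<bar>s\<bar> powr (-e) * exp (- c * s\<^sup>2)) \<partial>lborel) < \<infinity>"
proof -
  let ?f = "\<lambda>s::real. ennreal (indicator {0..1} s * s powr (-e))"
  have pw: "ennreal (\<bar>s\<bar> powr (-e) * exp (- c * s\<^sup>2)) \<le> ?f s + ?f (-s) + ennreal (exp (- c * s\<^sup>2))" for s
  proof (cases "\<bar>s\<bar> \<le> 1")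
    case True
    have "\<bar>s\<bar> powr (-e) * exp (- c * s\<^sup>2) \<le> \<bar>s\<bar> powr (-e) * 1"
      using assms by (intro mult_left_mono) auto
    also have "\<dots> \<le> indicator {0..1} s * s powr (-e) + indicator {0..1} (-s) * (-s) powr (-e)"
      using True by (cases "s \<ge> 0") (auto simp: indicator_def)
    finally show ?thesis
      by (simp add: ennreal_plus[symmetric] del: ennreal_plus) (smt (verit) add_increasing2 ennreal_leI exp_ge_zero ennreal_plus)
  next
    case False
    then have "\<bar>s\<bar> powr (-e) \<le> 1"
      using assms powr_mono2'[of "-e" 1 "\<bar>s\<bar>"] by auto
    then have "\<bar>s\<bar> powr (-e) * exp (- c * s\<^sup>2) \<le> exp (- c * s\<^sup>2)"
      by (intro mult_left_le_one_le) auto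
    then show ?thesis
      by (metis add.commute add_increasing2 ennreal_leI zero_le)
  qed
  have "(\<integral>\<^sup>+ s. ennreal (\<bar>s\<bar> powr (-e) * exp (- c * s\<^sup>2)) \<partial>lborel)
      \<le> (\<integral>\<^sup>+ s. ?f s + ?f (-s) + ennreal (exp (- c * s\<^sup>2)) \<partial>lborel)"
    by (intro nn_integral_mono pw)
  also have "\<dots> = (\<integral>\<^sup>+ s. ?f s \<partial>lborel) + (\<integral>\<^sup>+ s. ?f (-s) \<partial>lborel) + (\<integral>\<^sup>+ s. ennreal (exp (- c * s\<^sup>2)) \<partial>lborel)"
    by (simp add: nn_integral_add)
  also have "(\<integral>\<^sup>+ s. ?f (-s) \<partial>lborel) = (\<integral>\<^sup>+ s. ?f s \<partial>lborel)"
    using nn_integral_real_affine[of ?f "-1" 0] by simp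
  finally show ?thesis
    using powr_01_finite[OF assms(1,2)] gauss_finite[OF assms(3)]
    by (simp add: ennreal_add_eq_top order_le_less_trans)
qed

lemma norm_sq_vec: "(norm (t::real^'n::finite))\<^sup>2 = (\<Sum>k\<in>UNIV. (t$k)\<^sup>2)"
  unfolding power2_norm_eq_inner inner_vec_def by (simp add: power2_eq_square)

lemma ineqA:
  fixes t :: "real^'n::finite"
  assumes A: "A \<noteq> {}" and nz: "\<And>k. k \<in> A \<Longrightarrow> t$k \<noteq> 0" and a: "a \<ge> 0"
  shows "(\<Sum>k\<in>A. (t$k)\<^sup>2) powr (-a/2) \<le> (\<Prod>k\<in>A. \<bar>t$k\<bar> powr (-a / card A))"
proof -
  let ?S = "(\<Sum>k\<in>A. (t$k)\<^sup>2)"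
  have fin: "finite A" by simp
  have cA: "card A > 0" using A fin by (simp add: card_gt_0_iff)
  have ge: "?S \<ge> (t$k)\<^sup>2" if "k \<in> A" for k
    using that fin by (intro member_le_sum) auto
  obtain k0 where "k0 \<in> A" using A by blast
  then have Spos: "?S > 0" using ge[of k0] nz[of k0] by (smt (verit) zero_less_power2)
  have "?S powr (-a/2) = ?S powr (real (card A) * (-a / (2 * card A)))"
    using cA by simp
  also have "\<dots> = (?S powr (-a / (2 * card A))) ^ card A"
    using Spos by (simp add: powr_power)
  also have "\<dots> = (\<Prod>k\<in>A. ?S powr (-a / (2 * card A)))"
    by simp
  also have "\<dots> \<le> (\<Prod>k\<in>A. ((t$k)\<^sup>2) powr (-a / (2 * card A)))"
  proof (rule prod_mono)
    fix k assume k: "k \<in> A"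
    show "0 \<le> ?S powr (-a / (2 * card A)) \<and> ?S powr (-a / (2 * card A)) \<le> ((t$k)\<^sup>2) powr (-a / (2 * card A))"
      using k nz[OF k] ge[OF k] a cA by (auto intro!: powr_mono2' divide_nonneg_pos)
  qed
  also have "\<dots> = (\<Prod>k\<in>A. \<bar>t$k\<bar> powr (-a / card A))"
  proof (rule prod.cong)
    fix k assume "k \<in> A"
    have "(t$k)\<^sup>2 = \<bar>t$k\<bar> powr (2::real)"
      using powr_realpow'[of "\<bar>t$k\<bar>" 2] by simp
    then have "((t$k)\<^sup>2) powr (-a / (2 * card A)) = (\<bar>t$k\<bar> powr 2) powr (-a / (2 * card A))"
      by simp
    also have "\<dots> = \<bar>t$k\<bar> powr (-a / card A)"
      unfolding powr_powr by simp
    finally show "((t$k)\<^sup>2) powr (-a / (2 * card A)) = \<bar>t$k\<bar> powr (-a / card A)" .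
  qed simp
  finally show ?thesis .
qed

lemma ineqB:
  fixes t :: "real^'n::finite"
  assumes nz: "\<And>k. t$k \<noteq> 0" and g: "\<gamma> \<ge> 0" and w: "\<And>k. w k \<ge> 0" and ws: "(\<Sum>k\<in>UNIV. w k) = 1"
  shows "norm t powr (-\<gamma>) \<le> (\<Prod>k\<in>UNIV. \<bar>t$k\<bar> powr (-\<gamma> * w k))"
proof -
  have tnz: "norm t \<noteq> 0" using nz by (metis norm_eq_zero zero_index)
  have "norm t powr (-\<gamma>) = norm t powr (\<Sum>k\<in>UNIV. -\<gamma> * w k)"
    using ws by (simp add: sum_negf sum_distrib_left[symmetric])
  also have "\<dots> = (\<Prod>k\<in>UNIV. norm t powr (-\<gamma> * w k))"
    using tnz by (rule powr_sum)
  also have "\<dots> \<le> (\<Prod>k\<in>UNIV. \<bar>t$k\<bar> powr (-\<gamma> * w k))"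
  proof (rule prod_mono)
    fix k
    show "0 \<le> norm t powr (-\<gamma> * w k) \<and> norm t powr (-\<gamma> * w k) \<le> \<bar>t$k\<bar> powr (-\<gamma> * w k)"
      using nz[of k] g w[of k] component_le_norm_cart[of t k]
      by (auto intro!: powr_mono2' simp: mult_nonneg_nonneg)
  qed
  finally show ?thesis .
qed

lemma exp_norm_prod:
  fixes t :: "real^'n::finite"
  shows "exp (- c * (norm t)\<^sup>2) = (\<Prod>k\<in>UNIV. exp (- c * (t$k)\<^sup>2))"
  by (simp add: norm_sq_vec sum_distrib_left exp_sum)

definition Gf :: "real \<Rightarrow> real \<Rightarrow> real \<Rightarrow> ennreal" where
  "Gf c e s = (if s = 0 then \<infinity> else ennreal (\<bar>s\<bar> powr (-e) * exp (- c * s\<^sup>2)))"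

definition Phi :: "'n::finite set \<Rightarrow> real \<Rightarrow> real \<Rightarrow> real \<Rightarrow> real^'n \<Rightarrow> ennreal" where
  "Phi A a g c t = (if (\<Sum>k\<in>A. (t$k)\<^sup>2) = 0 then \<infinity>
     else ennreal ((\<Sum>k\<in>A. (t$k)\<^sup>2) powr (-a/2) * (norm t powr (-g) * exp (- c * (norm t)\<^sup>2))))"

lemma Gf_nz: "Gf c e s \<noteq> 0"
  by (simp add: Gf_def)

lemma Phi_le:
  fixes t :: "real^'n::finite"
  assumes A: "A \<noteq> {}" and a: "a \<ge> 0" and g: "g \<ge> 0" and w: "\<And>k. w k \<ge> 0" and ws: "(\<Sum>k\<in>UNIV. w k) = 1"
  shows "Phi A a g c t \<le> (\<Prod>k\<in>UNIV. Gf c ((if k \<in> A then a / card A else 0) + g * w k) (t$k))"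
proof (cases "\<forall>k. t$k \<noteq> 0")
  case False
  then obtain k where "t$k = 0" by blast
  then have "Gf c ((if k \<in> A then a / card A else 0) + g * w k) (t$k) = \<infinity>"
    by (simp add: Gf_def)
  then have "(\<Prod>k\<in>UNIV. Gf c ((if k \<in> A then a / card A else 0) + g * w k) (t$k)) = \<infinity>"
    unfolding infinity_ennreal_def ennreal_prod_eq_top using Gf_nz unfolding infinity_ennreal_def
    by (intro conjI finite_UNIV ballI bexI[of _ k]) auto
  then show ?thesis by simp
next
  case True
  obtain k0 where "k0 \<in> A" using A by blast
  have Spos: "(\<Sum>k\<in>A. (t$k)\<^sup>2) > 0"
    using True \<open>k0 \<in> A\<close> by (intro sum_pos2[of A k0]) auto
  have r1: "(\<Sum>k\<in>A. (t$k)\<^sup>2) powr (-a/2) \<le> (\<Prod>k\<in>UNIV. \<bar>t$k\<bar> powr (- (if k \<in> A then a / card A else 0)))"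
  proof -
    have "(\<Prod>k\<in>UNIV. \<bar>t$k\<bar> powr (- (if k \<in> A then a / card A else 0))) = (\<Prod>k\<in>A. \<bar>t$k\<bar> powr (-a / card A))"
    proof -
      have "(\<Prod>k\<in>UNIV. \<bar>t$k\<bar> powr (- (if k \<in> A then a / card A else 0)))
          = (\<Prod>k\<in>UNIV. if k \<in> A then \<bar>t$k\<bar> powr (-a / card A) else 1)"
        using True by (intro prod.cong) auto
      also have "\<dots> = (\<Prod>k\<in>{k\<in>UNIV. k \<in> A}. \<bar>t$k\<bar> powr (-a / card A))"
        by (rule prod.inter_filter[symmetric]) simp
      finally show ?thesis by simp
    qed
    then show ?thesis using ineqA[OF A _ a, of t] True by simp
  qed
  have r2: "norm t powr (-g) \<le> (\<Prod>k\<in>UNIV. \<bar>t$k\<bar> powr (-g * w k))"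
    using True by (intro ineqB g w ws) auto
  have "(\<Sum>k\<in>A. (t$k)\<^sup>2) powr (-a/2) * (norm t powr (-g) * exp (- c * (norm t)\<^sup>2))
     \<le> (\<Prod>k\<in>UNIV. \<bar>t$k\<bar> powr (- (if k \<in> A then a / card A else 0))) *
        ((\<Prod>k\<in>UNIV. \<bar>t$k\<bar> powr (-g * w k)) * (\<Prod>k\<in>UNIV. exp (- c * (t$k)\<^sup>2)))"
    unfolding exp_norm_prod[symmetric]
    by (intro mult_mono r1 r2 mult_right_mono) (auto intro!: prod_nonneg mult_nonneg_nonneg)
  also have "\<dots> = (\<Prod>k\<in>UNIV. \<bar>t$k\<bar> powr (- ((if k \<in> A then a / card A else 0) + g * w k)) * exp (- c * (t$k)\<^sup>2))"
    unfolding prod.distrib[symmetric]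
  proof (rule prod.cong)
    fix k
    show "\<bar>t$k\<bar> powr (- (if k \<in> A then a / card A else 0)) * (\<bar>t$k\<bar> powr (-g * w k) * exp (- c * (t$k)\<^sup>2))
      = \<bar>t$k\<bar> powr (- ((if k \<in> A then a / card A else 0) + g * w k)) * exp (- c * (t$k)\<^sup>2)"
    proof -
      have e: "- ((if k \<in> A then a / card A else 0) + g * w k) = (- (if k \<in> A then a / card A else 0)) + (-g * w k)"
        by simp
      show ?thesis unfolding e powr_add by (simp only: mult.assoc)
    qed
  qed simp
  finally have real_ineq: "(\<Sum>k\<in>A. (t$k)\<^sup>2) powr (-a/2) * (norm t powr (-g) * exp (- c * (norm t)\<^sup>2))
     \<le> (\<Prod>k\<in>UNIV. \<bar>t$k\<bar> powr (- ((if k \<in> A then a / card A else 0) + g * w k)) * exp (- c * (t$k)\<^sup>2))" .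
  have "(\<Prod>k\<in>UNIV. Gf c ((if k \<in> A then a / card A else 0) + g * w k) (t$k))
      = (\<Prod>k\<in>UNIV. ennreal (\<bar>t$k\<bar> powr (- ((if k \<in> A then a / card A else 0) + g * w k)) * exp (- c * (t$k)\<^sup>2)))"
    using True by (simp add: Gf_def)
  also have "\<dots> = ennreal (\<Prod>k\<in>UNIV. \<bar>t$k\<bar> powr (- ((if k \<in> A then a / card A else 0) + g * w k)) * exp (- c * (t$k)\<^sup>2))"
    by (rule prod_ennreal) simp
  finally show ?thesis
    using Spos real_ineq by (simp add: Phi_def ennreal_leI)
qed

lemma Gf_meas[measurable]: "Gf c e \<in> borel_measurable borel"
  unfolding Gf_def by measurable

lemma Phi_meas[measurable]: "(Phi A a g c :: real^'n::finite \<Rightarrow> ennreal) \<in> borel_measurable borel"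
  unfolding Phi_def by measurable

lemma Gf_int: "(\<integral>\<^sup>+ s. Gf c e s \<partial>lborel) = (\<integral>\<^sup>+ s. ennreal (\<bar>s\<bar> powr (-e) * exp (- c * s\<^sup>2)) \<partial>lborel)"
proof (rule nn_integral_cong_AE)
  show "AE s in lborel. Gf c e s = ennreal (\<bar>s\<bar> powr (-e) * exp (- c * s\<^sup>2))"
    using AE_lborel_singleton[of 0] by eventually_elim (simp add: Gf_def)
qed

lemma vec_prod_integral:
  assumes [measurable]: "\<And>k. f k \<in> borel_measurable borel"
  shows "(\<integral>\<^sup>+ t. (\<Prod>k\<in>UNIV. f k (t$k)) \<partial>(lborel :: (real^'n::finite) measure))
       = (\<Prod>k\<in>UNIV. \<integral>\<^sup>+ s. f k s \<partial>lborel)"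
proof -
  have meas: "(\<lambda>x. vec_lambda x :: real^'n) \<in> (\<Pi>\<^sub>M i\<in>UNIV. (lborel::real measure)) \<rightarrow>\<^sub>M borel"
    by (subst borel_measurable_euclidean_space) (auto simp: Basis_vec_def inner_axis)
  have "(\<integral>\<^sup>+ t. (\<Prod>k\<in>UNIV. f k (t$k)) \<partial>(lborel :: (real^'n::finite) measure))
      = (\<integral>\<^sup>+ x. (\<Prod>k\<in>UNIV. f k ((vec_lambda x :: real^'n)$k)) \<partial>(\<Pi>\<^sub>M i\<in>UNIV. (lborel::real measure)))"
    by (subst lborel_vec_PiM) (simp add: nn_integral_distr meas)
  also have "\<dots> = (\<integral>\<^sup>+ x. (\<Prod>k\<in>UNIV. f k (x k)) \<partial>(\<Pi>\<^sub>M i\<in>UNIV. (lborel::real measure)))"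
    by simp
  also have "\<dots> = (\<Prod>k\<in>UNIV. \<integral>\<^sup>+ s. f k s \<partial>lborel)"
    by (rule product_sigma_finite.product_nn_integral_prod[OF psf_lborel]) (auto simp: measurable_lborel1)
  finally show ?thesis .
qed

lemma Phi_int:
  fixes Q :: "real^'n::finite^'n"
  assumes Q: "orthogonal_matrix Q"
    and A: "A \<noteq> {}" and a: "a \<ge> 0" and g: "g \<ge> 0" and w: "\<And>k. w k \<ge> 0" and ws: "(\<Sum>k\<in>UNIV. w k) = 1"
  shows "(\<integral>\<^sup>+ v. Phi A a g c (Q *v v) \<partial>lborel)
     \<le> (\<Prod>k\<in>UNIV. \<integral>\<^sup>+ s. ennreal (\<bar>s\<bar> powr (- ((if k \<in> A then a / card A else 0) + g * w k)) * exp (- c * s\<^sup>2)) \<partial>lborel)"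
proof -
  have mQ: "(\<lambda>v. Q *v v) \<in> borel_measurable borel"
    by (intro borel_measurable_continuous_onI linear_continuous_on) simp
  have "(\<integral>\<^sup>+ v. Phi A a g c (Q *v v) \<partial>lborel) = (\<integral>\<^sup>+ t. Phi A a g c t \<partial>(distr lborel borel (\<lambda>v. Q *v v)))"
    by (subst nn_integral_distr) (auto simp: mQ measurable_lborel1)
  also have "\<dots> = (\<integral>\<^sup>+ t. Phi A a g c t \<partial>lborel)"
    by (simp add: orth_lborel_invariant[OF Q])
  also have "\<dots> \<le> (\<integral>\<^sup>+ t. (\<Prod>k\<in>UNIV. Gf c ((if k \<in> A then a / card A else 0) + g * w k) (t$k)) \<partial>lborel)"
    by (intro nn_integral_mono Phi_le A a g w ws)
  also have "\<dots> = (\<Prod>k\<in>UNIV. \<integral>\<^sup>+ s. Gf c ((if k \<in> A then a / card A else 0) + g * w k) s \<partial>lborel)"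
    by (rule vec_prod_integral) simp
  also have "\<dots> = (\<Prod>k\<in>UNIV. \<integral>\<^sup>+ s. ennreal (\<bar>s\<bar> powr (- ((if k \<in> A then a / card A else 0) + g * w k)) * exp (- c * s\<^sup>2)) \<partial>lborel)"
    by (simp add: Gf_int)
  finally show ?thesis .
qed

lemma exists_Q:
  fixes X :: "(real^'n::finite) set"
  assumes fin: "finite X" and cX: "card X \<le> m"
  obtains Q :: "real^'n^'n" and A :: "'n set"
  where "orthogonal_matrix Q" "card A = CARD('n) - m" "\<And>k x. k \<in> A \<Longrightarrow> x \<in> X \<Longrightarrow> Q $ k \<bullet> x = 0"
proof -
  define V where "V = span X"
  define W where "W = {y. \<forall>x\<in>V. orthogonal x y}"
  have sV: "subspace V" by (simp add: V_def)
  have sW: "subspace W" unfolding W_def by (rule subspace_orthogonal_to_vectors)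
  have dV: "dim V \<le> m"
    using dim_le_card[of V X] fin cX by (simp add: V_def)
  have dVW: "dim W + dim V = CARD('n)"
    using dim_subspace_orthogonal_to_vectors[of V UNIV] sV by (simp add: W_def)
  obtain BV where BV: "BV \<subseteq> V" "pairwise orthogonal BV" "\<And>x. x \<in> BV \<Longrightarrow> norm x = 1"
      "independent BV" "card BV = dim V" "span BV = V"
    using orthonormal_basis_subspace[OF sV] by metis
  obtain BW where BW: "BW \<subseteq> W" "pairwise orthogonal BW" "\<And>x. x \<in> BW \<Longrightarrow> norm x = 1"
      "independent BW" "card BW = dim W" "span BW = W"
    using orthonormal_basis_subspace[OF sW] by metis
  have finBV: "finite BV" using BV(4) by (rule independent_imp_finite)
  have finBW: "finite BW" using BW(4) by (rule independent_imp_finite)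
  have cross: "v \<bullet> w = 0" if "v \<in> V" "w \<in> W" for v w
    using that by (auto simp: W_def orthogonal_def)
  have disj: "BV \<inter> BW = {}"
  proof (rule ccontr)
    assume "BV \<inter> BW \<noteq> {}"
    then obtain b where b: "b \<in> BV" "b \<in> BW" by blast
    then have "b \<bullet> b = 0" using cross BV(1) BW(1) by blast
    then have "b = 0" by simp
    then show False using BV(3)[OF b(1)] by simp
  qed
  define B where "B = BV \<union> BW"
  have finB: "finite B" using finBV finBW by (simp add: B_def)
  have cB: "card B = CARD('n)"
    using card_Un_disjoint[OF finBV finBW disj] BV(5) BW(5) dVW by (simp add: B_def)
  have orthB: "u \<bullet> v = (if u = v then 1 else 0)" if "u \<in> B" "v \<in> B" for u v
  proof (cases "u = v")
    case True
    then have "norm u = 1" using that BV(3) BW(3) by (auto simp: B_def)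
    then show ?thesis using True by (simp add: norm_eq_1)
  next
    case False
    have "u \<bullet> v = 0"
      using that False BV(1,2) BW(1,2) cross[of u v] cross[of v u]
      by (auto simp: B_def pairwise_def orthogonal_def inner_commute subset_iff)
    then show ?thesis using False by simp
  qed
  obtain \<beta> where \<beta>: "bij_betw \<beta> (UNIV::'n set) B"
    using finite_same_card_bij[of "UNIV::'n set" B] finB cB by auto
  define Q :: "real^'n^'n" where "Q = (\<chi> k. \<beta> k)"
  have inB: "\<beta> k \<in> B" for k using \<beta> by (auto simp: bij_betw_def)
  have injb: "\<beta> k = \<beta> l \<longleftrightarrow> k = l" for k l using \<beta> by (auto simp: bij_betw_def inj_on_def)
  have "(Q ** transpose Q) $ k $ l = mat 1 $ k $ l" for k l
  proof -
    have "(Q ** transpose Q) $ k $ l = \<beta> k \<bullet> \<beta> l"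
      by (simp add: matrix_matrix_mult_def transpose_def Q_def inner_vec_def)
    also have "\<dots> = mat 1 $ k $ l"
      using orthB[OF inB inB] injb by (simp add: mat_def)
    finally show ?thesis .
  qed
  then have "Q ** transpose Q = mat 1"
    by (simp add: vec_eq_iff)
  then have oQ: "orthogonal_matrix Q"
    by (simp add: orthogonal_matrix_def matrix_left_right_inverse)
  define A0 where "A0 = {k. \<beta> k \<in> BW}"
  have "card A0 = card BW"
  proof -
    have "bij_betw \<beta> A0 BW"
      using \<beta> by (auto simp: A0_def bij_betw_def inj_on_def B_def)
    then show ?thesis by (rule bij_betw_same_card)
  qed
  then have "CARD('n) - m \<le> card A0" using BW(5) dVW dV by linarith
  then obtain A where A: "A \<subseteq> A0" "card A = CARD('n) - m"
    by (metis obtain_subset_with_card_n)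
  have "Q $ k \<bullet> x = 0" if "k \<in> A" "x \<in> X" for k x
  proof -
    have "\<beta> k \<in> W" using that A BW(1) by (auto simp: A0_def)
    moreover have "x \<in> V" using that by (simp add: V_def span_base)
    ultimately show ?thesis using cross[of x "\<beta> k"] by (simp add: Q_def inner_commute)
  qed
  then show ?thesis using that[OF oQ A(2)] by blast
qed

lemma gram_meas: "(\<lambda>x. gram S x) \<in> borel_measurable (\<Pi>\<^sub>M i\<in>I. (lborel::(real^'n::finite) measure))" if "S \<subseteq> I"
  for S :: "'p::finite set"
proof -
  have E: "(\<lambda>x. gmat S x $ i $ j) \<in> borel_measurable (\<Pi>\<^sub>M i\<in>I. (lborel::(real^'n::finite) measure))" for i j
  proof (cases "i \<in> S \<and> j \<in> S")
    case True
    then have "i \<in> I" "j \<in> I" using that by auto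
    then have "(\<lambda>x. x i \<bullet> x j) \<in> borel_measurable (\<Pi>\<^sub>M i\<in>I. (lborel::(real^'n::finite) measure))"
      by measurable
    then show ?thesis using True by (simp add: gmat_def)
  next
    case False
    then have "(\<lambda>x::'p \<Rightarrow> real^'n. gmat S x $ i $ j) = (\<lambda>x. if i = j then 1 else 0)"
      by (auto simp: gmat_def)
    then show ?thesis by (simp only:) (rule borel_measurable_const)
  qed
  show ?thesis
    unfolding gram_def det_def
    by (intro borel_measurable_sum borel_measurable_times borel_measurable_prod E borel_measurable_const)
qed

lemma norm_Q:
  fixes Q :: "real^'n::finite^'n"
  assumes Q: "orthogonal_matrix Q"
  shows "norm (Q *v v) = norm v"
proof -
  have lin: "linear (\<lambda>v. Q *v v)" by (rule matrix_vector_mul_linear)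
  have "orthogonal_transformation (\<lambda>v. Q *v v)"
    unfolding orthogonal_transformation_matrix
    using Q lin by (simp add: matrix_of_matrix_vector_mul)
  then show ?thesis by (simp add: orthogonal_transformation)
qed

definition hfun :: "real \<Rightarrow> real \<Rightarrow> real^'n::finite \<Rightarrow> real" where
  "hfun c g v = norm v powr (-g) * exp (- c * (norm v)\<^sup>2)"

lemma hfun_nonneg: "hfun c g v \<ge> 0"
  by (simp add: hfun_def)

lemma hfun_meas[measurable]: "hfun c g \<in> borel_measurable borel"
  unfolding hfun_def by measurable

definition Ffun :: "real \<Rightarrow> ('p::finite \<Rightarrow> real) \<Rightarrow> real \<Rightarrow> 'p set \<Rightarrow> ('p \<Rightarrow> real^'n::finite) \<Rightarrow> ennreal" where
  "Ffun a \<gamma> c S x = ennreal (gram S x powr (-a/2) * (\<Prod>i\<in>S. hfun c (\<gamma> i) (x i)))"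

lemma Ffun_meas:
  assumes "S \<subseteq> I"
  shows "(\<lambda>x. Ffun a \<gamma> c S x) \<in> borel_measurable (\<Pi>\<^sub>M i\<in>I. (lborel::(real^'n::finite) measure))"
proof -
  have g: "(\<lambda>x. gram S x) \<in> borel_measurable (\<Pi>\<^sub>M i\<in>I. (lborel::(real^'n::finite) measure))"
    by (rule gram_meas[OF assms])
  have h: "(\<lambda>x. hfun c (\<gamma> i) (x i)) \<in> borel_measurable (\<Pi>\<^sub>M i\<in>I. (lborel::(real^'n::finite) measure))"
    if "i \<in> S" for i
  proof -
    have "i \<in> I" using that assms by auto
    then show ?thesis by measurable
  qed
  show ?thesis
    unfolding Ffun_def
    by (rule measurable_compose[OF _ measurable_ennreal])
       (intro borel_measurable_times powr_real_measurable g borel_measurable_prod h borel_measurable_const)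
qed

definition Iint :: "real \<Rightarrow> real \<Rightarrow> ennreal" where
  "Iint c e = (\<integral>\<^sup>+ s. ennreal (\<bar>s\<bar> powr (-e) * exp (- c * s\<^sup>2)) \<partial>lborel)"

lemma pointwise_step:
  fixes x :: "'p::finite \<Rightarrow> real^'n::finite" and Q :: "real^'n^'n"
  assumes j: "j \<notin> S" and fin: "finite S" and Q: "orthogonal_matrix Q"
    and A: "\<And>k i. k \<in> A \<Longrightarrow> i \<in> S \<Longrightarrow> Q $ k \<bullet> x i = 0"
    and a: "a \<ge> 0"
  shows "Ffun a \<gamma> c (insert j S) (x(j := v))
     \<le> Ffun a \<gamma> c S x * Phi A a (\<gamma> j) c (Q *v v)"
proof -
  let ?P = "\<Prod>i\<in>S. hfun c (\<gamma> i) (x i)"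
  let ?g1 = "gram (insert j S) (x(j := v))"
  let ?g0 = "gram S x"
  let ?s = "\<Sum>k\<in>A. ((Q *v v)$k)\<^sup>2"
  have P0: "?P \<ge> 0" by (intro prod_nonneg) (simp add: hfun_nonneg)
  have g00: "?g0 \<ge> 0" using gram_nonneg[OF fin] .
  obtain y where y: "y \<in> span (x ` S)" "\<And>i. i \<in> S \<Longrightarrow> (v - y) \<bullet> x i = 0"
    "?g1 = ((v - y) \<bullet> (v - y)) * ?g0"
    using gram_decomp[OF j fin, of x v] by blast
  have g10: "?g1 \<ge> 0" using y(3) g00 by simp
  have prodeq: "(\<Prod>i\<in>insert j S. hfun c (\<gamma> i) ((x(j := v)) i)) = hfun c (\<gamma> j) v * ?P"
  proof -
    have "(\<Prod>i\<in>S. hfun c (\<gamma> i) ((x(j := v)) i)) = ?P"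
      using j by (intro prod.cong) auto
    then show ?thesis using j fin by (simp add: prod.insert)
  qed
  have lhs: "Ffun a \<gamma> c (insert j S) (x(j := v)) = ennreal (?g1 powr (-a/2) * (hfun c (\<gamma> j) v * ?P))"
    unfolding Ffun_def prodeq ..
  have Qy: "(Q *v y) $ k = 0" if "k \<in> A" for k
  proof -
    have "orthogonal (Q $ k) y"
      by (rule orthogonal_to_span[OF y(1)]) (use A[OF that] in \<open>auto simp: orthogonal_def\<close>)
    then show ?thesis by (simp add: orthogonal_def matrix_vector_mult_def inner_vec_def)
  qed
  have s_le: "?s \<le> (v - y) \<bullet> (v - y)"
  proof -
    have "?s = (\<Sum>k\<in>A. ((Q *v (v - y))$k)\<^sup>2)"
      using Qy by (intro sum.cong) (auto simp: matrix_vector_mult_diff_distrib)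
    also have "\<dots> \<le> (\<Sum>k\<in>UNIV. ((Q *v (v - y))$k)\<^sup>2)"
      by (intro sum_mono2) auto
    also have "\<dots> = (norm (Q *v (v - y)))\<^sup>2"
      by (simp add: norm_sq_vec)
    also have "\<dots> = (v - y) \<bullet> (v - y)"
      by (simp add: norm_Q[OF Q] power2_norm_eq_inner)
    finally show ?thesis .
  qed
  have s0: "?s \<ge> 0" by (intro sum_nonneg) simp
  show ?thesis
  proof (cases "?P = 0 \<or> ?g1 = 0")
    case True
    then have "?g1 powr (-a/2) * (hfun c (\<gamma> j) v * ?P) = 0" by auto
    then show ?thesis unfolding lhs by (metis ennreal_0 zero_le)
  next
    case False
    then have Ppos: "?P > 0" and g1pos: "?g1 > 0" using P0 g10 by (simp_all only: de_Morgan_disj less_le) simp_all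
    have g0pos: "?g0 > 0" using g1pos y(3) g00 by (metis less_eq_real_def mult_zero_right)
    have coef: "Ffun a \<gamma> c S x = ennreal (?g0 powr (-a/2) * ?P)"
      by (simp add: Ffun_def)
    have coefpos: "?g0 powr (-a/2) * ?P > 0" using g0pos Ppos by simp
    show ?thesis
    proof (cases "?s = 0")
      case True
      then have "Phi A a (\<gamma> j) c (Q *v v) = \<infinity>" by (simp add: Phi_def)
      moreover have "ennreal (?g0 powr (-a/2) * ?P) \<noteq> 0" using coefpos by (simp only: ennreal_eq_0_iff not_le)
      ultimately have "Ffun a \<gamma> c S x * Phi A a (\<gamma> j) c (Q *v v) = \<infinity>"
        unfolding coef by (simp add: ennreal_mult_top)
      then show ?thesis by simp
    next
      case False
      then have spos: "?s > 0" using s0 by simp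
      have phi: "Phi A a (\<gamma> j) c (Q *v v) = ennreal (?s powr (-a/2) * hfun c (\<gamma> j) v)"
        using False by (simp add: Phi_def hfun_def norm_Q[OF Q])
      have "?g1 \<ge> ?s * ?g0"
        using y(3) s_le g00 by (simp add: mult_right_mono)
      then have "?g1 powr (-a/2) \<le> (?s * ?g0) powr (-a/2)"
        using spos g0pos a by (intro powr_mono2') auto
      also have "\<dots> = ?s powr (-a/2) * ?g0 powr (-a/2)"
        by (rule powr_mult)
      finally have "?g1 powr (-a/2) * (hfun c (\<gamma> j) v * ?P) \<le> (?s powr (-a/2) * ?g0 powr (-a/2)) * (hfun c (\<gamma> j) v * ?P)"
        by (intro mult_right_mono) (simp_all add: P0 hfun_nonneg)
      also have "\<dots> = (?g0 powr (-a/2) * ?P) * (?s powr (-a/2) * hfun c (\<gamma> j) v)"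
        by (simp add: algebra_simps)
      finally have ri: "?g1 powr (-a/2) * (hfun c (\<gamma> j) v * ?P) \<le> (?g0 powr (-a/2) * ?P) * (?s powr (-a/2) * hfun c (\<gamma> j) v)" .
      have "ennreal (?g0 powr (-a/2) * ?P) * ennreal (?s powr (-a/2) * hfun c (\<gamma> j) v)
          = ennreal ((?g0 powr (-a/2) * ?P) * (?s powr (-a/2) * hfun c (\<gamma> j) v))"
        by (rule ennreal_mult[symmetric]) (simp_all add: P0 hfun_nonneg)
      then show ?thesis
        unfolding lhs coef phi using ri by (simp add: ennreal_leI)
    qed
  qed
qed

definition Bc :: "nat \<Rightarrow> nat \<Rightarrow> real \<Rightarrow> real \<Rightarrow> real \<Rightarrow> ennreal" where
  "Bc n p a g c = Iint c (a / real (n - (p - 1)) + g * (2 / (real (n - (p - 1)) * (real p + 1)))) ^ (n - (p - 1))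
      * Iint c (g * (1 / (real p + 1))) ^ (p - 1)"

lemma Bc_finite:
  assumes a: "a = real n - real p - 1" "a > 0" and g: "0 \<le> g" "g \<le> real p" and c: "c > 0"
    and p1: "p \<ge> 1"
  shows "Bc n p a g c < \<infinity>"
proof -
  have np: "n > p" using a by linarith
  define K where "K = n - (p - 1)"
  have KR: "real K = a + 2" using np a p1 by (simp add: K_def of_nat_diff)
  have Kpos: "real K > 0" using KR a by simp
  have e1: "a / real K + g * (2 / (real K * (real p + 1))) < 1"
  proof -
    have pp: "real p + 1 > 0" by simp
    have t1: "g * (2 / (real K * (real p + 1))) \<le> real p * (2 / (real K * (real p + 1)))"
      using g Kpos pp by (intro mult_right_mono) auto
    have "real p / (real p + 1) < 1" using pp by simp
    then have "(2 / real K) * (real p / (real p + 1)) < (2 / real K) * 1"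
      using Kpos by (intro mult_strict_left_mono) auto
    moreover have "real p * (2 / (real K * (real p + 1))) = (2 / real K) * (real p / (real p + 1))"
      by simp
    ultimately have t2: "real p * (2 / (real K * (real p + 1))) < 2 / real K" by (metis mult.right_neutral)
    have t3: "a / real K + 2 / real K = 1"
      using KR Kpos by (simp add: add_divide_distrib[symmetric])
    show ?thesis using t1 t2 t3 by linarith
  qed
  have e1': "0 \<le> a / real K + g * (2 / (real K * (real p + 1)))"
    using a g Kpos by simp
  have e2: "g * (1 / (real p + 1)) < 1" "0 \<le> g * (1 / (real p + 1))"
    using g by (simp_all add: divide_less_eq)
  have "Iint c (a / real K + g * (2 / (real K * (real p + 1)))) < \<infinity>"
    unfolding Iint_def by (rule oneD_finite[OF e1' e1 c])
  moreover have "Iint c (g * (1 / (real p + 1))) < \<infinity>"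
    unfolding Iint_def by (rule oneD_finite[OF e2(2) e2(1) c])
  ultimately show ?thesis
    unfolding Bc_def K_def[symmetric]
    by (simp add: ennreal_mult_less_top power_less_top_ennreal)
qed

lemma inner_bound:
  fixes x :: "'p::finite \<Rightarrow> real^'n::finite" and \<gamma> :: "'p \<Rightarrow> real"
  assumes j: "j \<notin> S" and fin: "finite S" and cS: "card S < CARD('p)"
    and a: "a = real CARD('n) - real CARD('p) - 1" "a > 0"
    and g: "0 \<le> \<gamma> j" "\<gamma> j \<le> real CARD('p)" and c: "c > 0"
  shows "(\<integral>\<^sup>+ v. Ffun a \<gamma> c (insert j S) (x(j := v)) \<partial>lborel) \<le> Ffun a \<gamma> c S x * Bc CARD('n) CARD('p) a (\<gamma> j) c"
proof -
  define n where "n = CARD('n)"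
  define p where "p = CARD('p)"
  have np: "n > p" using a by (simp add: n_def p_def)
  have p1: "p \<ge> 1" unfolding p_def using finite_UNIV_card_ge_0[where 'a='p] by simp
  define K where "K = n - (p - 1)"
  have KR: "real K = a + 2" using np a p1 by (simp add: K_def of_nat_diff n_def p_def)
  have cX: "card (x ` S) \<le> p - 1" using card_image_le[OF fin, of x] cS by (simp add: p_def)
  obtain Q :: "real^'n^'n" and A where Q: "orthogonal_matrix Q" and cA: "card A = n - (p - 1)"
    and orth: "\<And>k y. k \<in> A \<Longrightarrow> y \<in> x ` S \<Longrightarrow> Q $ k \<bullet> y = 0"
    using exists_Q[of "x ` S" "p - 1"] fin cX unfolding n_def by blast
  have cAK: "card A = K" using cA by (simp add: K_def)
  have Ane: "A \<noteq> {}" using cAK KR a by auto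
  define wi where "wi = 2 / (real K * (real p + 1))"
  define wo where "wo = 1 / (real p + 1)"
  define w where "w k = (if k \<in> A then wi else wo)" for k
  have w0: "w k \<ge> 0" for k by (simp add: w_def wi_def wo_def)
  have ws: "(\<Sum>k\<in>UNIV. w k) = 1"
  proof -
    have "(\<Sum>k\<in>UNIV. w k) = real (card A) * wi + real (card (UNIV - A)) * wo"
      unfolding w_def by (simp add: sum.If_cases Int_commute Diff_eq)
    also have "card (UNIV - A) = n - K"
      using cAK by (simp add: card_Diff_subset n_def)
    also have "real (n - K) = real p - 1"
      using np p1 by (simp add: K_def of_nat_diff)
    finally have "(\<Sum>k\<in>UNIV. w k) = real K * wi + (real p - 1) * wo" using cAK by simp
    also have "real K * wi = 2 / (real p + 1)"
    proof -
      have "real K > 0" using KR a by simp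
      then show ?thesis by (simp add: wi_def)
    qed
    also have "(real p - 1) * wo = (real p - 1) / (real p + 1)"
      by (simp add: wo_def)
    also have "2 / (real p + 1) + (real p - 1) / (real p + 1) = 1"
    proof -
      have "real p + 1 > 0" by simp
      then show ?thesis by (simp add: add_divide_distrib[symmetric])
    qed
    finally show ?thesis .
  qed
  have mQ: "(\<lambda>v. Q *v v) \<in> borel_measurable borel"
    by (intro borel_measurable_continuous_onI linear_continuous_on) simp
  have mPhi: "(\<lambda>v. Phi A a (\<gamma> j) c (Q *v v)) \<in> borel_measurable lborel"
    using measurable_compose[OF mQ Phi_meas] by (simp add: measurable_lborel1)
  have "(\<integral>\<^sup>+ v. Ffun a \<gamma> c (insert j S) (x(j := v)) \<partial>lborel)
      \<le> (\<integral>\<^sup>+ v. Ffun a \<gamma> c S x * Phi A a (\<gamma> j) c (Q *v v) \<partial>lborel)"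
    using a(2) by (intro nn_integral_mono pointwise_step[OF j fin Q]) (auto intro: orth)
  also have "\<dots> = Ffun a \<gamma> c S x * (\<integral>\<^sup>+ v. Phi A a (\<gamma> j) c (Q *v v) \<partial>lborel)"
    by (rule nn_integral_cmult[OF mPhi])
  also have "(\<integral>\<^sup>+ v. Phi A a (\<gamma> j) c (Q *v v) \<partial>lborel)
      \<le> (\<Prod>k\<in>UNIV. Iint c ((if k \<in> A then a / card A else 0) + \<gamma> j * w k))"
    unfolding Iint_def using a(2) g(1) by (intro Phi_int[OF Q Ane] w0 ws) auto
  also have "(\<Prod>k\<in>UNIV. Iint c ((if k \<in> A then a / card A else 0) + \<gamma> j * w k))
      = (\<Prod>k\<in>UNIV. if k \<in> A then Iint c (a / K + \<gamma> j * wi) else Iint c (\<gamma> j * wo))"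
    by (intro prod.cong) (auto simp: w_def cAK)
  also have "\<dots> = Iint c (a / K + \<gamma> j * wi) ^ card A * Iint c (\<gamma> j * wo) ^ card (UNIV - A)"
    by (simp add: prod.If_cases Int_commute Diff_eq)
  also have "\<dots> = Bc n p a (\<gamma> j) c"
  proof -
    have "card (UNIV - A) = p - 1"
      using cAK np by (simp add: card_Diff_subset n_def K_def)
    then show ?thesis unfolding Bc_def K_def[symmetric] wi_def wo_def using cAK by simp
  qed
  finally show ?thesis
    unfolding n_def p_def by (simp add: mult_left_mono del: fun_upd_apply)
qed

lemma main_finite:
  fixes \<gamma> :: "'p::finite \<Rightarrow> real"
  assumes a: "a = real CARD('n::finite) - real CARD('p) - 1" "a > 0"
    and g: "\<And>i. 0 \<le> \<gamma> i \<and> \<gamma> i \<le> real CARD('p)" and c: "c > 0"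
  shows "(\<integral>\<^sup>+ x. Ffun a \<gamma> c S x \<partial>(\<Pi>\<^sub>M i\<in>S. (lborel::(real^'n) measure))) < \<infinity>"
proof -
  have "finite S" by simp
  then show ?thesis
  proof (induction S rule: finite_induct)
    case empty
    show ?case by (simp add: Ffun_def PiM_empty nn_integral_count_space_finite)
  next
    case (insert j S)
    have cS: "card S < CARD('p)"
    proof -
      have "card (insert j S) \<le> CARD('p)" by (rule card_mono) auto
      then show ?thesis using insert(1,2) by simp
    qed
    have "(\<integral>\<^sup>+ x. Ffun a \<gamma> c (insert j S) x \<partial>(\<Pi>\<^sub>M i\<in>insert j S. (lborel::(real^'n) measure)))
        = (\<integral>\<^sup>+ x. (\<integral>\<^sup>+ v. Ffun a \<gamma> c (insert j S) (x(j := v)) \<partial>lborel) \<partial>(\<Pi>\<^sub>M i\<in>S. (lborel::(real^'n) measure)))"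
      by (rule product_sigma_finite.product_nn_integral_insert[OF psf_lborel insert(1,2) Ffun_meas]) simp
    also have "\<dots> \<le> (\<integral>\<^sup>+ x. Ffun a \<gamma> c S x * Bc CARD('n) CARD('p) a (\<gamma> j) c \<partial>(\<Pi>\<^sub>M i\<in>S. (lborel::(real^'n) measure)))"
      using g[of j] by (intro nn_integral_mono inner_bound[OF insert(2,1) cS a _ _ c]) auto
    also have "\<dots> = (\<integral>\<^sup>+ x. Ffun a \<gamma> c S x \<partial>(\<Pi>\<^sub>M i\<in>S. (lborel::(real^'n) measure))) * Bc CARD('n) CARD('p) a (\<gamma> j) c"
      by (rule nn_integral_multc[OF Ffun_meas]) simp
    also have "\<dots> < \<infinity>"
      using insert.IH Bc_finite[OF a, of "\<gamma> j" c] g[of j] c finite_UNIV_card_ge_0[where 'a='p]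
      by (simp add: ennreal_mult_less_top)
    finally show ?case .
  qed
qed

lemma mcol_meas[measurable]: "(\<lambda>M::real^'p::finite^'n::finite. mcol M i) \<in> borel_measurable borel"
  unfolding mcol_def
  by (intro borel_measurable_continuous_onI continuous_intros)

lemma detMM_meas: "(\<lambda>M::real^'p::finite^'n::finite. det (transpose M ** M)) \<in> borel_measurable borel"
proof -
  have E: "(\<lambda>M::real^'p^'n. M $ a $ i) \<in> borel_measurable borel" for a i
    by (intro borel_measurable_continuous_onI continuous_intros)
  show ?thesis
    unfolding det_def matrix_matrix_mult_def transpose_def
    by (simp, intro borel_measurable_sum borel_measurable_times borel_measurable_prod E borel_measurable_const)
qed

lemma entry_bound:
  fixes N y m :: real
  assumes N: "N > 0"
  shows "normal_density m (1 / sqrt N) y \<le> (1 / sqrt (2 * pi * (1 / sqrt N)\<^sup>2) * exp (N * y\<^sup>2 / 2)) * exp (- (N/4) * m\<^sup>2)"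
proof -
  have s: "(1 / sqrt N)\<^sup>2 = 1 / N" using N by (simp add: power_divide)
  have "- (y - m)\<^sup>2 / (2 * (1 / sqrt N)\<^sup>2) \<le> N * y\<^sup>2 / 2 + (- (N/4) * m\<^sup>2)"
  proof -
    have "0 \<le> (N/4) * (2 * y - m)\<^sup>2" using N by simp
    then show ?thesis using N unfolding s by (simp add: field_simps power2_eq_square) 
  qed
  then have "exp (- (y - m)\<^sup>2 / (2 * (1 / sqrt N)\<^sup>2)) \<le> exp (N * y\<^sup>2 / 2) * exp (- (N/4) * m\<^sup>2)"
    by (simp add: exp_add[symmetric])
  then show ?thesis
    unfolding normal_density_def by (simp add: mult.assoc divide_right_mono)
qed

lemma lik_bound:
  fixes Y M :: "real^'p::finite^'n::finite"
  assumes N: "N > 0"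
  shows "lik N Y M \<le> (\<Prod>a\<in>UNIV. \<Prod>i\<in>UNIV. 1 / sqrt (2 * pi * (1 / sqrt N)\<^sup>2) * exp (N * (Y$a$i)\<^sup>2 / 2))
      * (\<Prod>i\<in>UNIV. exp (- (N/4) * (norm (mcol M i))\<^sup>2))"
proof -
  have "lik N Y M \<le> (\<Prod>a\<in>UNIV. \<Prod>i\<in>UNIV. (1 / sqrt (2 * pi * (1 / sqrt N)\<^sup>2) * exp (N * (Y$a$i)\<^sup>2 / 2)) * exp (- (N/4) * (M$a$i)\<^sup>2))"
    unfolding lik_def
    by (intro prod_mono conjI prod_nonneg entry_bound[OF N]) auto
  also have "\<dots> = (\<Prod>a\<in>UNIV. \<Prod>i\<in>UNIV. 1 / sqrt (2 * pi * (1 / sqrt N)\<^sup>2) * exp (N * (Y$a$i)\<^sup>2 / 2))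
      * (\<Prod>a\<in>UNIV. \<Prod>i\<in>UNIV. exp (- (N/4) * (M$a$i)\<^sup>2))"
    by (simp only: prod.distrib)
  also have "(\<Prod>a\<in>UNIV. \<Prod>i\<in>UNIV. exp (- (N/4) * (M$a$i)\<^sup>2)) = (\<Prod>i\<in>UNIV. \<Prod>a\<in>UNIV. exp (- (N/4) * (M$a$i)\<^sup>2))"
    by (rule prod.swap)
  also have "\<dots> = (\<Prod>i\<in>UNIV. exp (- (N/4) * (norm (mcol M i))\<^sup>2))"
  proof (rule prod.cong)
    fix i
    show "(\<Prod>a\<in>UNIV. exp (- (N/4) * (M$a$i)\<^sup>2)) = exp (- (N/4) * (norm (mcol M i))\<^sup>2)"
      using exp_norm_prod[of "N/4" "mcol M i"] by (simp add: mcol_def)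
  qed simp
  finally show ?thesis .
qed

theorem lemma4:
  fixes N :: real and \<gamma> :: "'p::finite \<Rightarrow> real" and Y :: "real^'p^'n::finite"
  assumes "real CARD('n) - real CARD('p) - 1 > 0"
    and "N > 0"
    and "\<And>i. 0 \<le> \<gamma> i \<and> \<gamma> i \<le> real CARD('p)"
  shows "m_MSVS2 N \<gamma> Y < \<infinity>"
proof -
  define a where "a = real CARD('n) - real CARD('p) - 1"
  have a: "a = real CARD('n) - real CARD('p) - 1" "a > 0" using assms(1) by (simp_all add: a_def)
  define c where "c = N / 4"
  have c: "c > 0" using assms(2) by (simp add: c_def)
  define Cst where "Cst = (\<Prod>a\<in>UNIV. \<Prod>i\<in>UNIV. 1 / sqrt (2 * pi * (1 / sqrt N)\<^sup>2) * exp (N * (Y$a$i)\<^sup>2 / 2))"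
  have Cst0: "Cst \<ge> 0" unfolding Cst_def by (intro prod_nonneg) auto
  define G where "G M = ennreal (det (transpose M ** M) powr (-a/2) * (\<Prod>i\<in>UNIV. hfun c (\<gamma> i) (mcol M i)))"
    for M :: "real^'p^'n"
  have Gmeas: "G \<in> borel_measurable borel"
  proof -
    have h: "(\<lambda>M::real^'p^'n. hfun c (\<gamma> i) (mcol M i)) \<in> borel_measurable borel" for i
      by measurable
    show ?thesis
      unfolding G_def
      by (rule measurable_compose[OF _ measurable_ennreal])
         (intro borel_measurable_times powr_real_measurable detMM_meas borel_measurable_prod h borel_measurable_const)
  qed
  have M_eq: "(\<chi> a i. mcol M i $ a) = M" for M :: "real^'p^'n"
    by (simp add: vec_eq_iff mcol_def)
  have GF: "G M = Ffun a \<gamma> c UNIV (\<lambda>i. mcol M i)" for M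
  proof -
    have "det (transpose M ** M) = gram UNIV (\<lambda>i. mcol M i)"
      using gram_UNIV[of "\<lambda>i. mcol M i"] by (simp add: M_eq)
    then show ?thesis by (simp add: G_def Ffun_def)
  qed
  have pw: "ennreal (lik N Y M * prior_MSVS2 \<gamma> M) \<le> ennreal Cst * G M" for M
  proof -
    have pr0: "prior_MSVS2 \<gamma> M \<ge> 0" unfolding prior_MSVS2_def by (intro mult_nonneg_nonneg prod_nonneg) auto
    have "lik N Y M * prior_MSVS2 \<gamma> M \<le> (Cst * (\<Prod>i\<in>UNIV. exp (- (N/4) * (norm (mcol M i))\<^sup>2))) * prior_MSVS2 \<gamma> M"
      using lik_bound[OF assms(2), of Y M] pr0 unfolding Cst_def by (intro mult_right_mono) auto
    also have "\<dots> = Cst * (det (transpose M ** M) powr (-a/2) * (\<Prod>i\<in>UNIV. hfun c (\<gamma> i) (mcol M i)))"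
      unfolding prior_MSVS2_def hfun_def c_def a_def
      by (simp add: prod.distrib algebra_simps)
    finally have "lik N Y M * prior_MSVS2 \<gamma> M \<le> Cst * (det (transpose M ** M) powr (-a/2) * (\<Prod>i\<in>UNIV. hfun c (\<gamma> i) (mcol M i)))" .
    then show ?thesis
      unfolding G_def using Cst0
      by (simp add: ennreal_mult[symmetric] ennreal_leI hfun_nonneg prod_nonneg)
  qed
  have m1: "m_MSVS2 N \<gamma> Y \<le> (\<integral>\<^sup>+ M. ennreal Cst * G M \<partial>lborel)"
    unfolding m_MSVS2_def by (intro nn_integral_mono pw)
  have m2: "(\<integral>\<^sup>+ M. ennreal Cst * G M \<partial>lborel) = ennreal Cst * (\<integral>\<^sup>+ M. G M \<partial>lborel)"
    by (rule nn_integral_cmult) (simp add: Gmeas measurable_lborel1)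
  have "(\<integral>\<^sup>+ M. G M \<partial>lborel) = (\<integral>\<^sup>+ x. G (\<chi> a i. x i $ a) \<partial>(\<Pi>\<^sub>M i\<in>UNIV. (lborel::(real^'n) measure)))"
  proof -
    have meas: "(\<lambda>x. \<chi> a i. x i $ a :: real^'p^'n) \<in> (\<Pi>\<^sub>M i\<in>UNIV. (lborel::(real^'n) measure)) \<rightarrow>\<^sub>M borel"
      by (rule mat_PiM_meas)
    show ?thesis
      by (subst lborel_mat_PiM) (simp add: nn_integral_distr meas Gmeas)
  qed
  also have "\<dots> = (\<integral>\<^sup>+ x. Ffun a \<gamma> c UNIV x \<partial>(\<Pi>\<^sub>M i\<in>UNIV. (lborel::(real^'n) measure)))"
  proof (rule nn_integral_cong)
    fix x :: "'p \<Rightarrow> real^'n"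
    have "(\<lambda>i. mcol (\<chi> a i. x i $ a) i) = x" by (simp add: fun_eq_iff vec_eq_iff mcol_def)
    then show "G (\<chi> a i. x i $ a) = Ffun a \<gamma> c UNIV x" by (simp add: GF)
  qed
  also have "\<dots> < \<infinity>"
    by (rule main_finite[OF a assms(3) c])
  finally have "(\<integral>\<^sup>+ M. G M \<partial>lborel) < \<infinity>" .
  then have "ennreal Cst * (\<integral>\<^sup>+ M. G M \<partial>lborel) < \<infinity>"
    by (simp add: ennreal_mult_less_top)
  then show ?thesis using m1 m2 by simp
qed

end
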